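(* Let $f$ be a nonnegative integer-valued function on $V(G)$. Every graph $G$ that is $t$-iso-tough for $t(v)=f(v)(f(v)+1)$ has an $(f,f+1)$-factor.
   Context: Graphs are finite, have no loops, but may have multiple edges; degrees count multiplicities. For $S\subseteq V(G)$, $G\setminus S$ is the graph obtained by deleting $S$ and $I(G\setminus S)$ is its set of isolated vertices. For a real function $t$ on $V(G)$, $G$ is $t$-iso-tough if $\sum_{v\in I(G\setminus S)}t(v)\le |S|$ for all $S\subseteq V(G)$. An $(f,f+1)$-factor is a spanning subgraph $F$ with $f(v)\le d_F(v)\le f(v)+1$ for all $v$. *)

theory Defs
  imports Complex_Main
begin

text \<open>A finite loopless multigraph on the vertex set V is given by an edge-multiplicity
  function m :: 'a => 'a => nat, where m u v is the number of edges joining u and v.\<close>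

definition multigraph :: "'a set \<Rightarrow> ('a \<Rightarrow> 'a \<Rightarrow> nat) \<Rightarrow> bool" where
  "multigraph V m \<longleftrightarrow> finite V \<and> (\<forall>u v. m u v = m v u) \<and> (\<forall>v. m v v = 0)
     \<and> (\<forall>u v. m u v \<noteq> 0 \<longrightarrow> u \<in> V \<and> v \<in> V)"

definition mdegree :: "'a set \<Rightarrow> ('a \<Rightarrow> 'a \<Rightarrow> nat) \<Rightarrow> 'a \<Rightarrow> nat" where
  "mdegree V m v = (\<Sum>u\<in>V. m v u)"

definition iso_vertices :: "'a set \<Rightarrow> ('a \<Rightarrow> 'a \<Rightarrow> nat) \<Rightarrow> 'a set \<Rightarrow> 'a set" where
  "iso_vertices V m S = {v \<in> V - S. \<forall>u\<in>V - S. m v u = 0}"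

definition iso_tough :: "'a set \<Rightarrow> ('a \<Rightarrow> 'a \<Rightarrow> nat) \<Rightarrow> ('a \<Rightarrow> real) \<Rightarrow> bool" where
  "iso_tough V m t \<longleftrightarrow>
     (\<forall>S\<subseteq>V. (\<Sum>v\<in>iso_vertices V m S. t v) \<le> real (card S))"

definition spanning_subgraph :: "'a set \<Rightarrow> ('a \<Rightarrow> 'a \<Rightarrow> nat) \<Rightarrow> ('a \<Rightarrow> 'a \<Rightarrow> nat) \<Rightarrow> bool" where
  "spanning_subgraph V m F \<longleftrightarrow> multigraph V F \<and> (\<forall>u v. F u v \<le> m u v)"

definition ff1_factor :: "'a set \<Rightarrow> ('a \<Rightarrow> 'a \<Rightarrow> nat) \<Rightarrow> ('a \<Rightarrow> nat) \<Rightarrow> ('a \<Rightarrow> 'a \<Rightarrow> nat) \<Rightarrow> bool" where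
  "ff1_factor V m f F \<longleftrightarrow> spanning_subgraph V m F \<and>
     (\<forall>v\<in>V. f v \<le> mdegree V F v \<and> mdegree V F v \<le> f v + 1)"

end

theory Submission
  imports Defs
begin

inductive trail :: "'a \<Rightarrow> ('a \<times> 'a \<times> bool) list \<Rightarrow> 'a \<Rightarrow> bool \<Rightarrow> bool" where
  base: "trail x [(x,y,False)] y False"
| step: "trail x st y c \<Longrightarrow> trail x (st @ [(y,z,\<not>c)]) z (\<not>c)"

definition cnt :: "('a \<times> 'a \<times> bool) list \<Rightarrow> bool \<Rightarrow> 'a \<Rightarrow> 'a \<Rightarrow> nat" where
  "cnt st b u w = length (filter (\<lambda>(p,q,c). c = b \<and> ((p=u \<and> q=w) \<or> (p=w \<and> q=u))) st)"

definition okt :: "('a \<Rightarrow> 'a \<Rightarrow> nat) \<Rightarrow> ('a \<Rightarrow> 'a \<Rightarrow> nat) \<Rightarrow> ('a \<times> 'a \<times> bool) list \<Rightarrow> bool" where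
  "okt m F st \<longleftrightarrow> (\<forall>u w. cnt st False u w \<le> m u w - F u w \<and> cnt st True u w \<le> F u w)"

definition swap :: "('a \<Rightarrow> 'a \<Rightarrow> nat) \<Rightarrow> ('a \<times> 'a \<times> bool) list \<Rightarrow> 'a \<Rightarrow> 'a \<Rightarrow> nat" where
  "swap F st u w = F u w + cnt st False u w - cnt st True u w"

definition net :: "'a \<Rightarrow> ('a \<times> 'a \<times> bool) list \<Rightarrow> int" where
  "net v st = sum_list (map (\<lambda>(p,q,c). ((if v = p then 1 else 0) + (if v = q then 1 else 0)) * (if c then -1 else 1)) st)"

lemma trail_net: "trail x st y c \<Longrightarrow> net v st = (if v = x then 1 else 0) + (if v = y then (if c then -1 else 1) else 0)"
  by (induction rule: trail.induct) (auto simp: net_def)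

lemma cnt_sym: "cnt st b u w = cnt st b w u"
  unfolding cnt_def by (rule arg_cong[of _ _ length], rule filter_cong) auto

lemma cnt_append: "cnt (st @ st') b u w = cnt st b u w + cnt st' b u w"
  by (simp add: cnt_def)

lemma cnt_Cons: "cnt (s # st) b u w = cnt [s] b u w + cnt st b u w"
  by (simp add: cnt_def)

lemma cnt_single: "cnt [(p,q,c)] b u w = (if c = b \<and> ((p=u \<and> q=w) \<or> (p=w \<and> q=u)) then 1 else 0)"
  by (simp add: cnt_def)

lemma len_filter_take: "length (filter P (take n xs)) \<le> length (filter P xs)"
  by (induction xs arbitrary: n) (auto simp: take_Cons split: nat.split)

lemma cnt_take: "cnt (take n st) b u w \<le> cnt st b u w"
  unfolding cnt_def by (rule len_filter_take)

lemma cnt_pos: "cnt st b u w > 0 \<Longrightarrow> \<exists>k<length st. st ! k = (u,w,b) \<or> st ! k = (w,u,b)"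
proof -
  assume "cnt st b u w > 0"
  then have "filter (\<lambda>(p,q,c). c = b \<and> ((p=u \<and> q=w) \<or> (p=w \<and> q=u))) st \<noteq> []"
    unfolding cnt_def by auto
  then obtain s where "s \<in> set st" "(\<lambda>(p,q,c). c = b \<and> ((p=u \<and> q=w) \<or> (p=w \<and> q=u))) s"
    unfolding filter_empty_conv by blast
  then show ?thesis by (auto simp: in_set_conv_nth)
qed

lemma cnt_mem: "(p,q,c) \<in> set st \<Longrightarrow> cnt st c p q > 0"
  unfolding cnt_def by (auto simp: filter_empty_conv length_greater_0_conv)

lemma okt_take: assumes a: "okt m F st" shows "okt m F (take n st)"
  unfolding okt_def
proof (intro allI conjI)
  fix u w
  have "cnt st False u w \<le> m u w - F u w" "cnt st True u w \<le> F u w" using a unfolding okt_def by auto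
  then show "cnt (take n st) False u w \<le> m u w - F u w" "cnt (take n st) True u w \<le> F u w"
    using cnt_take[of n st False u w] cnt_take[of n st True u w] by linarith+
qed

lemma okt_snoc:
  assumes ok: "okt m F st" and lt: "cnt st b u w < (if b then F u w else m u w - F u w)"
    and ms: "\<forall>a b. m a b = m b a" and Fs: "\<forall>a b. F a b = F b a"
  shows "okt m F (st @ [(u,w,b)])"
  unfolding okt_def
proof (intro allI)
  fix u' w'
  have c: "cnt (st@[(u,w,b)]) b' u' w' = cnt st b' u' w' + (if b = b' \<and> (u=u' \<and> w=w' \<or> u=w' \<and> w=u') then 1 else 0)" for b'
    by (simp add: cnt_append cnt_single)
  have o: "cnt st False u' w' \<le> m u' w' - F u' w'" "cnt st True u' w' \<le> F u' w'"
    using ok unfolding okt_def by auto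
  show "cnt (st @ [(u, w, b)]) False u' w' \<le> m u' w' - F u' w' \<and> cnt (st @ [(u, w, b)]) True u' w' \<le> F u' w'"
  proof (cases "u=u' \<and> w=w' \<or> u=w' \<and> w=u'")
    case False
    then show ?thesis using c o by auto
  next
    case True
    then have e: "cnt st b' u' w' = cnt st b' u w" "m u' w' = m u w" "F u' w' = F u w" for b'
      using cnt_sym ms Fs by metis+
    show ?thesis using c[of True] c[of False] o e lt by (cases b) auto
  qed
qed

lemma trail_last: "trail x st y c \<Longrightarrow> st \<noteq> [] \<and> (\<exists>p. last st = (p,y,c))"
  by (induction rule: trail.induct) auto

lemma trail_prefix: "trail x st y c \<Longrightarrow> k < length st \<Longrightarrow> st ! k = (p,q,b) \<Longrightarrow> trail x (take (Suc k) st) q b"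
proof (induction arbitrary: k rule: trail.induct)
  case (base x y)
  then show ?case by (auto intro: trail.base)
next
  case (step x st y c z)
  show ?case
  proof (cases "k < length st")
    case True
    then show ?thesis using step by (auto simp: nth_append)
  next
    case False
    then have "k = length st" using step by auto
    then show ?thesis using step by (auto intro: trail.step)
  qed
qed

lemma okt_steps:
  assumes "okt m F st" "multigraph V m" "multigraph V F" "s \<in> set st"
  shows "fst s \<noteq> fst (snd s) \<and> fst s \<in> V \<and> fst (snd s) \<in> V"
proof -
  obtain p q c where s: "s = (p,q,c)" by (cases s) auto
  have "cnt st c p q > 0" using cnt_mem assms(4) s by metis
  moreover have "cnt st c p q \<le> (if c then F p q else m p q - F p q)" using assms(1) unfolding okt_def
    by (cases c) auto
  ultimately have "(if c then F p q else m p q - F p q) > 0" by linarith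
  then have "m p q > 0 \<or> F p q > 0" by (cases c) auto
  moreover have "\<forall>u v. m u v = m v u" "\<forall>v. m v v = 0" "\<forall>u v. m u v \<noteq> 0 \<longrightarrow> u \<in> V \<and> v \<in> V"
    "\<forall>v. F v v = 0" "\<forall>u v. F u v \<noteq> 0 \<longrightarrow> u \<in> V \<and> v \<in> V"
    using assms(2,3) unfolding multigraph_def by auto
  ultimately show ?thesis using s by (metis fst_conv snd_conv not_gr0)
qed

lemma sum_pair: "finite V \<Longrightarrow> p \<noteq> q \<Longrightarrow> p \<in> V \<Longrightarrow> q \<in> V \<Longrightarrow>
  (\<Sum>u\<in>V. (if (p=v \<and> q=u) \<or> (p=u \<and> q=v) then 1 else 0 :: int)) = (if v = p then 1 else 0) + (if v = q then 1 else 0)"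
proof -
  assume a: "finite V" "p \<noteq> q" "p \<in> V" "q \<in> V"
  show ?thesis
  proof (cases "v = p")
    case True
    then have "(\<Sum>u\<in>V. (if (p=v \<and> q=u) \<or> (p=u \<and> q=v) then 1 else 0 :: int)) = (\<Sum>u\<in>V. (if u = q then 1 else 0))"
      using a by (intro sum.cong) auto
    then show ?thesis using a True by simp
  next
    case False
    note F = False
    show ?thesis
    proof (cases "v = q")
      case True
      then have "(\<Sum>u\<in>V. (if (p=v \<and> q=u) \<or> (p=u \<and> q=v) then 1 else 0 :: int)) = (\<Sum>u\<in>V. (if u = p then 1 else 0))"
        using a F by (intro sum.cong) auto
      then show ?thesis using a True F by simp
    next
      case False
      then have "(\<Sum>u\<in>V. (if (p=v \<and> q=u) \<or> (p=u \<and> q=v) then 1 else 0 :: int)) = 0"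
        using a F by (intro sum.neutral) auto
      then show ?thesis using False F by simp
    qed
  qed
qed

lemma cnt_net:
  assumes "finite V" "\<forall>s\<in>set st. fst s \<noteq> fst (snd s) \<and> fst s \<in> V \<and> fst (snd s) \<in> V"
  shows "(\<Sum>u\<in>V. int (cnt st False v u) - int (cnt st True v u)) = net v st"
  using assms(2)
proof (induction st)
  case Nil
  then show ?case by (simp add: cnt_def net_def)
next
  case (Cons s st)
  obtain p q c where s: "s = (p,q,c)" by (cases s) auto
  have "(\<Sum>u\<in>V. int (cnt (s#st) False v u) - int (cnt (s#st) True v u))
      = (\<Sum>u\<in>V. int (cnt [s] False v u) - int (cnt [s] True v u)) + (\<Sum>u\<in>V. int (cnt st False v u) - int (cnt st True v u))"
    by (subst cnt_Cons, subst cnt_Cons[of _ st], simp add: sum.distrib[symmetric] algebra_simps)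
  also have "(\<Sum>u\<in>V. int (cnt [s] False v u) - int (cnt [s] True v u)) = ((if v = p then 1 else 0) + (if v = q then 1 else 0)) * (if c then -1 else 1)"
  proof -
    have pq: "p \<noteq> q" "p \<in> V" "q \<in> V" using Cons.prems s by auto
    have "(\<Sum>u\<in>V. int (cnt [s] False v u) - int (cnt [s] True v u)) = (\<Sum>u\<in>V. (if (p=v \<and> q=u) \<or> (p=u \<and> q=v) then 1 else 0 :: int) * (if c then -1 else 1))"
      by (rule sum.cong) (auto simp: s cnt_single)
    also have "\<dots> = (\<Sum>u\<in>V. (if (p=v \<and> q=u) \<or> (p=u \<and> q=v) then 1 else 0 :: int)) * (if c then -1 else 1)"
      by (simp add: sum_distrib_right)
    finally show ?thesis using sum_pair[OF assms(1) pq] by simp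
  qed
  also have "(\<Sum>u\<in>V. int (cnt st False v u) - int (cnt st True v u)) = net v st"
    using Cons.IH Cons.prems by simp
  also have "((if v = p then 1 else 0) + (if v = q then 1 else 0)) * (if c then -1 else 1) + net v st = net v (s # st)"
    unfolding net_def s by simp
  finally show ?case .
qed

definition valid :: "'a set \<Rightarrow> ('a \<Rightarrow> 'a \<Rightarrow> nat) \<Rightarrow> ('a \<Rightarrow> nat) \<Rightarrow> ('a \<Rightarrow> 'a \<Rightarrow> nat) \<Rightarrow> bool" where
  "valid V m f F \<longleftrightarrow> spanning_subgraph V m F \<and> (\<forall>v\<in>V. mdegree V F v \<le> f v + 1)"

definition mu :: "'a set \<Rightarrow> ('a \<Rightarrow> nat) \<Rightarrow> ('a \<Rightarrow> 'a \<Rightarrow> nat) \<Rightarrow> nat" where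
  "mu V f F = (\<Sum>v\<in>V. f v - mdegree V F v)"

lemma swap_multigraph:
  assumes "multigraph V m" "multigraph V F" "\<forall>u v. F u v \<le> m u v" "okt m F st"
  shows "multigraph V (swap F st) \<and> (\<forall>u v. swap F st u v \<le> m u v)"
proof -
  have b: "cnt st False u w \<le> m u w - F u w" "cnt st True u w \<le> F u w" for u w
    using assms(4) unfolding okt_def by auto
  have m: "finite V" "\<forall>u v. m u v = m v u" "\<forall>v. m v v = 0" "\<forall>u v. m u v \<noteq> 0 \<longrightarrow> u \<in> V \<and> v \<in> V"
    using assms(1) unfolding multigraph_def by auto
  have F: "\<forall>u v. F u v = F v u" "\<forall>v. F v v = 0" "\<forall>u v. F u v \<noteq> 0 \<longrightarrow> u \<in> V \<and> v \<in> V"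
    using assms(2) unfolding multigraph_def by auto
  have "swap F st u v = swap F st v u" for u v
    unfolding swap_def using F(1) cnt_sym[of st False u v] cnt_sym[of st True u v] by simp
  moreover have "swap F st v v = 0" for v
    using b[of v v] m(3) F(2) unfolding swap_def by simp
  moreover have "swap F st u v \<noteq> 0 \<longrightarrow> u \<in> V \<and> v \<in> V" for u v
  proof
    assume "swap F st u v \<noteq> 0"
    then have "F u v \<noteq> 0 \<or> m u v \<noteq> 0" using b[of u v] unfolding swap_def by auto
    then show "u \<in> V \<and> v \<in> V" using m F by blast
  qed
  moreover have "swap F st u v \<le> m u v" for u v
  proof -
    have "F u v + cnt st False u v \<le> m u v" using b(1)[of u v] le_diff_conv2[OF assms(3)[rule_format, of u v]] by simp
    then show ?thesis unfolding swap_def by arith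
  qed
  ultimately show ?thesis using m(1) unfolding multigraph_def by blast
qed

lemma swap_degree:
  assumes "multigraph V m" "multigraph V F" "okt m F st"
  shows "int (mdegree V (swap F st) v) = int (mdegree V F v) + net v st"
proof -
  have b: "cnt st True u w \<le> F u w" for u w
    using assms(3) unfolding okt_def by auto
  have fin: "finite V" using assms(1) unfolding multigraph_def by auto
  have st: "\<forall>s\<in>set st. fst s \<noteq> fst (snd s) \<and> fst s \<in> V \<and> fst (snd s) \<in> V"
    using okt_steps[OF assms(3,1,2)] by blast
  have "int (mdegree V (swap F st) v) = (\<Sum>u\<in>V. int (F v u) + (int (cnt st False v u) - int (cnt st True v u)))"
    unfolding mdegree_def swap_def of_nat_sum
    by (rule sum.cong) (simp_all add: of_nat_diff b trans_le_add1)
  also have "\<dots> = int (mdegree V F v) + net v st"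
    unfolding sum.distrib cnt_net[OF fin st] mdegree_def of_nat_sum by simp
  finally show ?thesis .
qed

lemma odd_sat:
  assumes mg: "multigraph V m" and val: "valid V m f F" and ok: "okt m F st"
    and tr: "trail x st y False" and def: "mdegree V F x < f x" and xV: "x \<in> V"
    and opt: "\<forall>F'. valid V m f F' \<longrightarrow> mu V f F \<le> mu V f F'"
  shows "y \<in> V \<and> f y + 1 \<le> mdegree V F y"
proof -
  have sp: "multigraph V F" "\<forall>u v. F u v \<le> m u v" "\<forall>v\<in>V. mdegree V F v \<le> f v + 1"
    using val unfolding valid_def spanning_subgraph_def by auto
  have fin: "finite V" using mg unfolding multigraph_def by auto
  obtain p where lp: "st \<noteq> []" "last st = (p,y,False)" using trail_last[OF tr] by auto
  have "y \<in> V" using okt_steps[OF ok mg sp(1), of "last st"] lp last_in_set[of st] by auto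
  moreover have "f y + 1 \<le> mdegree V F y"
  proof (rule ccontr)
    assume a: "\<not> ?thesis"
    let ?F = "swap F st"
    have dg: "int (mdegree V ?F v) = int (mdegree V F v) + (if v = x then 1 else 0) + (if v = y then 1 else 0)" for v
      using swap_degree[OF mg sp(1) ok, of v] trail_net[OF tr, of v] by simp
    have "valid V m f ?F"
      unfolding valid_def spanning_subgraph_def
    proof (intro conjI ballI)
      show "multigraph V ?F" "\<forall>u v. ?F u v \<le> m u v" using swap_multigraph[OF mg sp(1,2) ok] by auto
      fix v assume "v \<in> V"
      then show "mdegree V ?F v \<le> f v + 1" using dg[of v] sp(3) a def by (auto split: if_splits)
    qed
    moreover have "mu V f ?F < mu V f F"
      unfolding mu_def
    proof (rule sum_strict_mono_ex1[OF fin])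
      show "\<forall>v\<in>V. f v - mdegree V ?F v \<le> f v - mdegree V F v"
      proof
        fix v assume "v \<in> V"
        have "int (mdegree V F v) \<le> int (mdegree V ?F v)" using dg[of v] by simp
        then show "f v - mdegree V ?F v \<le> f v - mdegree V F v" by simp
      qed
      have "int (mdegree V F x) < int (mdegree V ?F x)" using dg[of x] by simp
      then have "mdegree V F x < mdegree V ?F x" by simp
      then have "f x - mdegree V ?F x < f x - mdegree V F x" using def by arith
      then show "\<exists>v\<in>V. f v - mdegree V ?F v < f v - mdegree V F v" using xV by blast
    qed
    ultimately show False using opt by auto
  qed
  ultimately show ?thesis by blast
qed

lemma even_unsat:
  assumes mg: "multigraph V m" and val: "valid V m f F" and ok: "okt m F st"
    and tr: "trail x st y True" and def: "mdegree V F x < f x" and xV: "x \<in> V"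
    and opt: "\<forall>F'. valid V m f F' \<longrightarrow> mu V f F \<le> mu V f F'"
  shows "y \<in> V \<and> mdegree V F y \<le> f y"
proof -
  have sp: "multigraph V F" "\<forall>u v. F u v \<le> m u v" "\<forall>v\<in>V. mdegree V F v \<le> f v + 1"
    using val unfolding valid_def spanning_subgraph_def by auto
  have fin: "finite V" using mg unfolding multigraph_def by auto
  obtain p where lp: "st \<noteq> []" "last st = (p,y,True)" using trail_last[OF tr] by auto
  have yV: "y \<in> V" using okt_steps[OF ok mg sp(1), of "last st"] lp last_in_set[of st] by auto
  moreover have "mdegree V F y \<le> f y"
  proof (rule ccontr)
    assume a: "\<not> ?thesis"
    then have yx: "y \<noteq> x" using def by auto
    let ?F = "swap F st"
    have dg: "int (mdegree V ?F v) = int (mdegree V F v) + (if v = x then 1 else 0) - (if v = y then 1 else 0)" for v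
      using swap_degree[OF mg sp(1) ok, of v] trail_net[OF tr, of v] by simp
    have "valid V m f ?F"
      unfolding valid_def spanning_subgraph_def
    proof (intro conjI ballI)
      show "multigraph V ?F" "\<forall>u v. ?F u v \<le> m u v" using swap_multigraph[OF mg sp(1,2) ok] by auto
      fix v assume "v \<in> V"
      then show "mdegree V ?F v \<le> f v + 1" using dg[of v] sp(3) a def yx by (auto split: if_splits)
    qed
    moreover have "mu V f ?F < mu V f F"
      unfolding mu_def
    proof (rule sum_strict_mono_ex1[OF fin])
      show "\<forall>v\<in>V. f v - mdegree V ?F v \<le> f v - mdegree V F v"
      proof
        fix v assume "v \<in> V"
        show "f v - mdegree V ?F v \<le> f v - mdegree V F v"
        proof (cases "v = y")
          case True
          have "int (f y) \<le> int (mdegree V ?F y)" using dg[of y] a yx by simp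
          then show ?thesis using True by simp
        next
          case False
          have "int (mdegree V F v) \<le> int (mdegree V ?F v)" using dg[of v] False by simp
          then show ?thesis by simp
        qed
      qed
      have "int (mdegree V F x) < int (mdegree V ?F x)" using dg[of x] yx by simp
      then have "mdegree V F x < mdegree V ?F x" by simp
      then have "f x - mdegree V ?F x < f x - mdegree V F x" using def by arith
      then show "\<exists>v\<in>V. f v - mdegree V ?F v < f v - mdegree V F v" using xV by blast
    qed
    ultimately show False using opt by auto
  qed
  ultimately show ?thesis by blast
qed

definition dS :: "'a set \<Rightarrow> ('a \<Rightarrow> 'a \<Rightarrow> nat) \<Rightarrow> 'a set \<Rightarrow> 'a \<Rightarrow> nat" where
  "dS V m S u = (\<Sum>w\<in>V - S. m u w)"

lemma card_nbrs: "finite V \<Longrightarrow> card {w\<in>V - S. 0 < m u w} \<le> dS V m S u"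
proof -
  assume fin: "finite V"
  have "card {w\<in>V - S. 0 < m u w} = (\<Sum>w\<in>{w\<in>V - S. 0 < m u w}. (1::nat))" by simp
  also have "\<dots> \<le> (\<Sum>w\<in>{w\<in>V - S. 0 < m u w}. m u w)" by (rule sum_mono) auto
  also have "\<dots> \<le> (\<Sum>w\<in>V - S. m u w)" by (rule sum_mono2) (use fin in auto)
  finally show ?thesis unfolding dS_def .
qed

lemma greedy:
  assumes mg: "multigraph V m"
  shows "T \<subseteq> V - S \<Longrightarrow> \<exists>I\<subseteq>T. (\<forall>u\<in>I. \<forall>w\<in>I. m u w = 0) \<and> (\<forall>u\<in>I. dS V m S u < f u) \<and>
     (\<Sum>u\<in>T. real (f u) - real (dS V m S u)) \<le> (\<Sum>u\<in>I. real (f u)^2)"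
proof (induction "card T" arbitrary: T rule: less_induct)
  case less
  have fin: "finite V" and ms: "\<forall>u v. m u v = m v u" and mz: "\<forall>v. m v v = 0"
    using mg unfolding multigraph_def by auto
  have finT: "finite T" using less.prems fin finite_subset by blast
  let ?c = "\<lambda>u. real (f u) - real (dS V m S u)"
  define T' where "T' = {u\<in>T. dS V m S u < f u}"
  show ?case
  proof (cases "T' = {}")
    case True
    then have "\<forall>u\<in>T. ?c u \<le> 0" unfolding T'_def by auto
    then have "(\<Sum>u\<in>T. ?c u) \<le> 0" by (simp add: sum_nonpos)
    then show ?thesis by (intro exI[of _ "{}"]) auto
  next
    case False
    have finT': "finite T'" using finT unfolding T'_def by auto
    obtain v where vT': "v \<in> T'" and vmax: "\<forall>u\<in>T'. f u \<le> f v"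
    proof -
      have "Max (f ` T') \<in> f ` T'" using finT' False by (intro Max_in) auto
      then obtain v where "v \<in> T'" "f v = Max (f ` T')" by auto
      moreover have "\<forall>u\<in>T'. f u \<le> Max (f ` T')" using finT' by auto
      ultimately show ?thesis using that by auto
    qed
    have vT: "v \<in> T" and vlt: "dS V m S v < f v" using vT' unfolding T'_def by auto
    define N where "N = {u\<in>T. 0 < m v u}"
    define R where "R = insert v N"
    have RT: "R \<subseteq> T" unfolding R_def N_def using vT by auto
    have h1: "card (T - R) < card T" using vT finT unfolding R_def by (intro psubset_card_mono) auto
    have h2: "T - R \<subseteq> V - S" using less.prems by auto
    obtain I2 where I2: "I2 \<subseteq> T - R" "\<forall>u\<in>I2. \<forall>w\<in>I2. m u w = 0" "\<forall>u\<in>I2. dS V m S u < f u"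
      "(\<Sum>u\<in>T - R. ?c u) \<le> (\<Sum>u\<in>I2. real (f u)^2)" using less.hyps[OF h1 h2] by blast
    define I where "I = insert v I2"
    have vI2: "v \<notin> I2" using I2(1) unfolding R_def by auto
    have finI2: "finite I2" using I2(1) finT finite_subset by blast
    have "I \<subseteq> T" using I2(1) vT unfolding I_def by auto
    moreover have "\<forall>u\<in>I. \<forall>w\<in>I. m u w = 0"
    proof (intro ballI)
      fix u w assume uI: "u \<in> I" and wI: "w \<in> I"
      have nv: "m v z = 0" if "z \<in> I2" for z using that I2(1) unfolding R_def N_def by auto
      have nv': "m z v = 0" if "z \<in> I2" for z using nv[OF that] ms by metis
      show "m u w = 0"
      proof (cases "u = v")
        case True
        then show ?thesis using wI nv mz unfolding I_def by auto
      next
        case False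
        then have "u \<in> I2" using uI unfolding I_def by auto
        then show ?thesis using wI nv' I2(2) unfolding I_def by auto
      qed
    qed
    moreover have "\<forall>u\<in>I. dS V m S u < f u" using I2(3) vlt unfolding I_def by auto
    moreover have "(\<Sum>u\<in>T. ?c u) \<le> (\<Sum>u\<in>I. real (f u)^2)"
    proof -
      have cb: "?c u \<le> real (f v)" if "u \<in> T" for u
      proof (cases "u \<in> T'")
        case True then show ?thesis using vmax by auto
      next
        case False then have "f u \<le> dS V m S u" using that unfolding T'_def by auto
        then show ?thesis by simp
      qed
      have cN: "card N \<le> dS V m S v"
      proof -
        have "N \<subseteq> {w\<in>V - S. 0 < m v w}" unfolding N_def using less.prems by auto
        then have "card N \<le> card {w\<in>V - S. 0 < m v w}" by (intro card_mono) (use fin in auto)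
        then show ?thesis using card_nbrs[OF fin, of S m v] by linarith
      qed
      have finN: "finite N" using finT unfolding N_def by auto
      have cR: "card R \<le> f v"
      proof -
        have "card R \<le> Suc (card N)" unfolding R_def using finN by (simp add: card_insert_if)
        then show ?thesis using cN vlt by linarith
      qed
      have "(\<Sum>u\<in>R. ?c u) \<le> real (card R) * real (f v)"
        using sum_bounded_above[of R ?c "real (f v)"] cb RT by auto
      also have "\<dots> \<le> real (f v) * real (f v)" using cR by (simp add: mult_right_mono)
      finally have sR: "(\<Sum>u\<in>R. ?c u) \<le> real (f v)^2" by (simp add: power2_eq_square)
      have "(\<Sum>u\<in>T. ?c u) = (\<Sum>u\<in>T - R. ?c u) + (\<Sum>u\<in>R. ?c u)" using sum.subset_diff[OF RT finT] by simp
      also have "\<dots> \<le> (\<Sum>u\<in>I2. real (f u)^2) + real (f v)^2" using I2(4) sR by linarith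
      also have "\<dots> = (\<Sum>u\<in>I. real (f u)^2)" unfolding I_def using vI2 finI2 by simp
      finally show ?thesis .
    qed
    ultimately show ?thesis by blast
  qed
qed

lemma count_contra:
  assumes mg: "multigraph V m" and Fm: "multigraph V F" and Fle: "\<forall>u v. F u v \<le> m u v"
    and SV: "S \<subseteq> V" and TV: "T \<subseteq> V" and ST: "S \<inter> T = {}" and xT: "x \<in> T"
    and Ssat: "\<forall>w\<in>S. f w + 1 \<le> mdegree V F w"
    and Tuns: "\<forall>u\<in>T. mdegree V F u \<le> f u" and xdef: "mdegree V F x < f x"
    and Tcl: "\<forall>u\<in>T. \<forall>w. F u w < m u w \<longrightarrow> w \<in> S"
    and Scl: "\<forall>w\<in>S. \<forall>z. 0 < F w z \<longrightarrow> z \<in> T"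
    and it: "iso_tough V m (\<lambda>v. real (f v) * (real (f v) + 1))"
  shows False
proof -
  have fin: "finite V" using mg unfolding multigraph_def by auto
  have Fsym: "\<forall>u v. F u v = F v u" using Fm unfolding multigraph_def by auto
  have finT: "finite T" and finS: "finite S" using fin TV SV finite_subset by blast+
  let ?c = "\<lambda>u. real (f u) - real (dS V m S u)"
  have A: "(\<Sum>w\<in>S. real (f w + 1)) \<le> (\<Sum>u\<in>T. \<Sum>w\<in>S. real (F u w))"
  proof -
    have "(\<Sum>w\<in>S. real (f w + 1)) \<le> (\<Sum>w\<in>S. real (mdegree V F w))"
      using Ssat by (intro sum_mono) auto
    also have "\<dots> = (\<Sum>w\<in>S. \<Sum>z\<in>T. real (F w z))"
    proof (rule sum.cong[OF refl])
      fix w assume wS: "w \<in> S"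
      have "real (mdegree V F w) = (\<Sum>z\<in>V. real (F w z))" unfolding mdegree_def by simp
      also have "\<dots> = (\<Sum>z\<in>T. real (F w z))"
      proof (rule sum.mono_neutral_right[OF fin TV])
        show "\<forall>z\<in>V - T. real (F w z) = 0" using Scl wS by auto
      qed
      finally show "real (mdegree V F w) = (\<Sum>z\<in>T. real (F w z))" .
    qed
    also have "\<dots> = (\<Sum>z\<in>T. \<Sum>w\<in>S. real (F w z))" by (rule sum.swap)
    also have "\<dots> = (\<Sum>u\<in>T. \<Sum>w\<in>S. real (F u w))"
      by (intro sum.cong refl) (use Fsym in metis)
    finally show ?thesis .
  qed
  have B: "real (mdegree V F u) = (\<Sum>w\<in>S. real (F u w)) + real (dS V m S u)" if uT: "u \<in> T" for u
  proof -
    have "real (mdegree V F u) = (\<Sum>w\<in>V. real (F u w))" by (simp add: mdegree_def)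
    also have "\<dots> = (\<Sum>w\<in>V - S. real (F u w)) + (\<Sum>w\<in>S. real (F u w))"
      using sum.subset_diff[OF SV fin] by simp
    also have "(\<Sum>w\<in>V - S. real (F u w)) = real (dS V m S u)"
      unfolding dS_def of_nat_sum
    proof (rule sum.cong[OF refl])
      fix w assume "w \<in> V - S"
      then have "\<not> F u w < m u w" using Tcl uT by auto
      then have "F u w = m u w" using Fle by (meson le_neq_implies_less)
      then show "real (F u w) = real (m u w)" by simp
    qed
    finally show ?thesis by simp
  qed
  have C: "1 + (\<Sum>w\<in>S. real (f w + 1)) \<le> (\<Sum>u\<in>T. ?c u)"
  proof -
    have "?c u = (real (f u) - real (mdegree V F u)) + (\<Sum>w\<in>S. real (F u w))" if "u \<in> T" for u
      using B[OF that] by simp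
    then have "(\<Sum>u\<in>T. ?c u) = (\<Sum>u\<in>T. (real (f u) - real (mdegree V F u)) + (\<Sum>w\<in>S. real (F u w)))"
      by (intro sum.cong refl) auto
    then have e: "(\<Sum>u\<in>T. ?c u) = (\<Sum>u\<in>T. real (f u) - real (mdegree V F u)) + (\<Sum>u\<in>T. \<Sum>w\<in>S. real (F u w))"
      by (simp add: sum.distrib)
    have "(\<Sum>u\<in>T. real (f u) - real (mdegree V F u)) = (real (f x) - real (mdegree V F x)) + (\<Sum>u\<in>T - {x}. real (f u) - real (mdegree V F u))"
      by (rule sum.remove[OF finT xT])
    moreover have "1 \<le> real (f x) - real (mdegree V F x)" using xdef by simp
    moreover have "0 \<le> (\<Sum>u\<in>T - {x}. real (f u) - real (mdegree V F u))"
      using Tuns by (intro sum_nonneg) auto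
    ultimately have "1 \<le> (\<Sum>u\<in>T. real (f u) - real (mdegree V F u))" by linarith
    then show ?thesis using e A by linarith
  qed
  have cS: "real (card S) \<le> (\<Sum>w\<in>S. real (f w + 1))"
  proof -
    have "real (card S) = (\<Sum>w\<in>S. 1)" by simp
    also have "\<dots> \<le> (\<Sum>w\<in>S. real (f w + 1))" by (intro sum_mono) auto
    finally show ?thesis .
  qed
  have "T \<subseteq> V - S" using TV ST by auto
  then obtain I where I: "I \<subseteq> T" "\<forall>u\<in>I. \<forall>w\<in>I. m u w = 0" "\<forall>u\<in>I. dS V m S u < f u"
    "(\<Sum>u\<in>T. ?c u) \<le> (\<Sum>u\<in>I. real (f u)^2)" using greedy[OF mg, of T S f] by blast
  have finI: "finite I" using I(1) finT finite_subset by blast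
  define S' where "S' = S \<union> (\<Union>u\<in>I. {w\<in>V - S. 0 < m u w})"
  have S'V: "S' \<subseteq> V" unfolding S'_def using SV by auto
  have "card S' \<le> card S + card (\<Union>u\<in>I. {w\<in>V - S. 0 < m u w})"
    unfolding S'_def by (rule card_Un_le)
  also have "card (\<Union>u\<in>I. {w\<in>V - S. 0 < m u w}) \<le> (\<Sum>u\<in>I. card {w\<in>V - S. 0 < m u w})"
    by (rule card_UN_le[OF finI])
  also have "\<dots> \<le> (\<Sum>u\<in>I. dS V m S u)"
    by (intro sum_mono card_nbrs[OF fin])
  finally have "card S' \<le> card S + (\<Sum>u\<in>I. dS V m S u)" by simp
  then have "real (card S') \<le> real (card S + (\<Sum>u\<in>I. dS V m S u))" by (simp only: of_nat_le_iff)
  then have cS': "real (card S') \<le> real (card S) + (\<Sum>u\<in>I. real (dS V m S u))"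
    by (simp add: of_nat_sum)
  have Iiso: "I \<subseteq> iso_vertices V m S'"
  proof
    fix u assume uI: "u \<in> I"
    have uV: "u \<in> V" and uS: "u \<notin> S" using uI I(1) TV ST by auto
    have "u \<notin> (\<Union>u\<in>I. {w\<in>V - S. 0 < m u w})" using I(2) uI by auto
    then have uS': "u \<notin> S'" unfolding S'_def using uS by auto
    have "\<forall>w\<in>V - S'. m u w = 0"
    proof
      fix w assume "w \<in> V - S'"
      then show "m u w = 0" unfolding S'_def using uI by auto
    qed
    then show "u \<in> iso_vertices V m S'" unfolding iso_vertices_def using uV uS' by auto
  qed
  have finiso: "finite (iso_vertices V m S')" using fin unfolding iso_vertices_def by auto
  have "(\<Sum>v\<in>I. real (f v) * (real (f v) + 1)) \<le> (\<Sum>v\<in>iso_vertices V m S'. real (f v) * (real (f v) + 1))"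
    by (rule sum_mono2[OF finiso Iiso]) auto
  also have "\<dots> \<le> real (card S')" using it S'V unfolding iso_tough_def by auto
  finally have D: "(\<Sum>v\<in>I. real (f v) * (real (f v) + 1)) \<le> real (card S')" .
  have "(\<Sum>v\<in>I. real (f v) * (real (f v) + 1)) = (\<Sum>v\<in>I. real (f v)^2) + (\<Sum>v\<in>I. real (f v))"
    by (simp add: sum.distrib[symmetric] algebra_simps power2_eq_square)
  moreover have "(\<Sum>u\<in>I. real (dS V m S u)) \<le> (\<Sum>v\<in>I. real (f v))"
    using I(3) by (intro sum_mono) auto
  ultimately show False using D cS' I(4) C cS by linarith
qed

theorem mainTheorem12:
  fixes V :: "'a set" and m :: "'a \<Rightarrow> 'a \<Rightarrow> nat" and f :: "'a \<Rightarrow> nat"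
  assumes "multigraph V m"
    and "iso_tough V m (\<lambda>v. real (f v) * (real (f v) + 1))"
  shows "\<exists>F. ff1_factor V m f F"
proof -
  have fin: "finite V" and ms: "\<forall>u v. m u v = m v u" using assms(1) unfolding multigraph_def by auto
  have v0: "valid V m f (\<lambda>_ _. 0)"
    unfolding valid_def spanning_subgraph_def multigraph_def mdegree_def using fin by auto
  obtain F where val: "valid V m f F" and opt: "\<forall>F'. valid V m f F' \<longrightarrow> mu V f F \<le> mu V f F'"
    using ex_has_least_nat[of "valid V m f" "\<lambda>_ _. 0" "mu V f", OF v0] by blast
  have sp: "multigraph V F" "\<forall>u v. F u v \<le> m u v"
    using val unfolding valid_def spanning_subgraph_def by auto
  have Fsym: "\<forall>u v. F u v = F v u" using sp(1) unfolding multigraph_def by auto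
  show ?thesis
  proof (cases "mu V f F = 0")
    case True
    then have "\<forall>v\<in>V. f v - mdegree V F v = 0" unfolding mu_def using fin by simp
    then show ?thesis unfolding ff1_factor_def using val unfolding valid_def by (intro exI[of _ F]) auto
  next
    case False
    have "\<exists>v\<in>V. f v - mdegree V F v \<noteq> 0" using False unfolding mu_def by (meson sum.neutral)
    then obtain x where xV: "x \<in> V" and xdef: "mdegree V F x < f x" by auto
    define Od where "Od = {y. \<exists>st. trail x st y False \<and> okt m F st}"
    define Ev where "Ev = insert x {y. \<exists>st. trail x st y True \<and> okt m F st}"
    have Od1: "y \<in> V \<and> f y + 1 \<le> mdegree V F y" if "y \<in> Od" for y
    proof -
      from that obtain st where "trail x st y False" "okt m F st" unfolding Od_def by auto
      then show ?thesis using odd_sat[OF assms(1) val \<open>okt m F st\<close> \<open>trail x st y False\<close> xdef xV opt] by blast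
    qed
    have Ev1: "y \<in> V \<and> mdegree V F y \<le> f y" if "y \<in> Ev" for y
    proof (cases "y = x")
      case True then show ?thesis using xV xdef by auto
    next
      case False
      with that obtain st where "trail x st y True" "okt m F st" unfolding Ev_def by auto
      then show ?thesis using even_unsat[OF assms(1) val \<open>okt m F st\<close> \<open>trail x st y True\<close> xdef xV opt] by blast
    qed
    have disj: "Od \<inter> Ev = {}"
    proof (rule ccontr)
      assume "Od \<inter> Ev \<noteq> {}"
      then obtain y where "y \<in> Od" "y \<in> Ev" by blast
      then show False using Od1[of y] Ev1[of y] by linarith
    qed
    have ok0: "okt m F []" by (simp add: okt_def cnt_def)
    have Tcl: "\<forall>u\<in>Ev. \<forall>w. F u w < m u w \<longrightarrow> w \<in> Od"
    proof (intro ballI allI impI)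
      fix u w assume uE: "u \<in> Ev" and lt: "F u w < m u w"
      show "w \<in> Od"
      proof (cases "u = x")
        case True
        have "trail x [(x,w,False)] w False" by (rule trail.base)
        moreover have "okt m F ([] @ [(x,w,False)])"
          by (rule okt_snoc[OF ok0 _ ms Fsym]) (use lt True in \<open>simp add: cnt_def\<close>)
        ultimately show ?thesis unfolding Od_def by auto
      next
        case False
        then obtain st where tr: "trail x st u True" and ok: "okt m F st" using uE unfolding Ev_def by auto
        show ?thesis
        proof (cases "cnt st False u w < m u w - F u w")
          case True
          have "trail x (st @ [(u,w,\<not>True)]) w (\<not>True)" by (rule trail.step[OF tr])
          then have "trail x (st @ [(u,w,False)]) w False" by simp
          moreover have "okt m F (st @ [(u,w,False)])" by (rule okt_snoc[OF ok _ ms Fsym]) (use True in simp)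
          ultimately show ?thesis unfolding Od_def by blast
        next
          case False
          then have cp: "cnt st False u w > 0" using lt by linarith
          obtain k where k: "k < length st" "st ! k = (u,w,False) \<or> st ! k = (w,u,False)" using cnt_pos[OF cp] by blast
          from k(2) show ?thesis
          proof (elim disjE)
            assume "st ! k = (u,w,False)"
            then have "trail x (take (Suc k) st) w False" using trail_prefix[OF tr k(1)] by blast
            then show ?thesis using okt_take[OF ok] unfolding Od_def by blast
          next
            assume "st ! k = (w,u,False)"
            then have "trail x (take (Suc k) st) u False" using trail_prefix[OF tr k(1)] by blast
            then have "u \<in> Od" using okt_take[OF ok] unfolding Od_def by blast
            then show ?thesis using uE disj by blast
          qed
        qed
      qed
    qed
    have Scl: "\<forall>w\<in>Od. \<forall>z. 0 < F w z \<longrightarrow> z \<in> Ev"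
    proof (intro ballI allI impI)
      fix w z assume wO: "w \<in> Od" and pos: "0 < F w z"
      obtain st where tr: "trail x st w False" and ok: "okt m F st" using wO unfolding Od_def by auto
      show "z \<in> Ev"
      proof (cases "cnt st True w z < F w z")
        case True
        have "trail x (st @ [(w,z,\<not>False)]) z (\<not>False)" by (rule trail.step[OF tr])
        then have "trail x (st @ [(w,z,True)]) z True" by simp
        moreover have "okt m F (st @ [(w,z,True)])" by (rule okt_snoc[OF ok _ ms Fsym]) (use True in simp)
        ultimately show ?thesis unfolding Ev_def by blast
      next
        case False
        then have cp: "cnt st True w z > 0" using pos by linarith
        obtain k where k: "k < length st" "st ! k = (w,z,True) \<or> st ! k = (z,w,True)" using cnt_pos[OF cp] by blast
        from k(2) show ?thesis
        proof (elim disjE)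
          assume "st ! k = (w,z,True)"
          then have "trail x (take (Suc k) st) z True" using trail_prefix[OF tr k(1)] by blast
          then show ?thesis using okt_take[OF ok] unfolding Ev_def by blast
        next
          assume "st ! k = (z,w,True)"
          then have "trail x (take (Suc k) st) w True" using trail_prefix[OF tr k(1)] by blast
          then have "w \<in> Ev" using okt_take[OF ok] unfolding Ev_def by blast
          then show ?thesis using wO disj by blast
        qed
      qed
    qed
    have SV: "Od \<subseteq> V" using Od1 by blast
    have TV: "Ev \<subseteq> V" using Ev1 by blast
    have xT: "x \<in> Ev" unfolding Ev_def by simp
    have Ssat: "\<forall>w\<in>Od. f w + 1 \<le> mdegree V F w" using Od1 by blast
    have Tuns: "\<forall>u\<in>Ev. mdegree V F u \<le> f u" using Ev1 by blast
    show ?thesis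
      using count_contra[OF assms(1) sp(1) sp(2) SV TV disj xT Ssat Tuns xdef Tcl Scl assms(2)] by (rule FalseE)
  qed
qed

end
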